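(* Let $\theta_{OLS}\in\mathbb R$ and let $\{SB_0(\iota_0):\iota_0\in\mathcal I_0\}$ be a nonempty bounded set of real numbers indexed by a baseline information set $\mathcal I_0$; write $\underline s=\inf_{\iota_0\in\mathcal I_0}SB_0(\iota_0)$ and $\overline s=\sup_{\iota_0\in\mathcal I_0}SB_0(\iota_0)$. Let $\Lambda$ be the set of possible distributions of $SB_0(I_0)$, i.e. probability distributions supported on $\{SB_0(\iota_0):\iota_0\in\mathcal I_0\}$. For $\lambda\in\Lambda$ and a random variable $Z\sim\lambda$, let $SB_1(\lambda)$ be the optimal choice of $s\in\mathbb R$ for one of the following losses: (L1) $\mathbb E|s-Z|$, whose minimizer is a median of $\lambda$; (L2) $\big(\mathbb E[(s-Z)^2]\big)^{1/2}$, whose minimizer is the mean of $\lambda$; (L$\infty$) $\operatorname{ess\,sup}|s-Z|$, whose minimizer is the midpoint of the smallest closed interval containing the support of $\lambda$. Define $ATT_\lambda=\theta_{OLS}-SB_1(\lambda)$. Then for each of the three losses, $$\Big[\inf_{\lambda\in\Lambda}ATT_\lambda,\ \sup_{\lambda\in\Lambda}ATT_\lambda\Big]=\big[\theta_{OLS}-\overline s,\ \theta_{OLS}-\underline s\big].$$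
   Context: Background: in a two-period difference-in-differences setting, $\theta_{OLS}=\mathbb E[Y_1\mid D=1]-\mathbb E[Y_1\mid D=0]$ and $SB_0(\iota_0)=\mathbb E[Y_0\mid D=1,I_0=\iota_0]-\mathbb E[Y_0\mid D=0,I_0=\iota_0]$ is the baseline selection bias given information $\iota_0$. A decision maker picks the post-treatment selection bias $SB_1$ by minimizing a $p$-norm loss $\big(\mathbb E_{I_0}|SB_1-SB_0(I_0)|^p\big)^{1/p}$, $p\in\{1,2,\infty\}$, for a given distribution $\lambda$ of $SB_0(I_0)$; the interval $[\inf_\lambda ATT_\lambda,\sup_\lambda ATT_\lambda]$ is called the robust generalized DID bounds. *)

theory Defs
  imports "HOL-Probability.Probability"
begin

definition Lambda :: "real set \<Rightarrow> real measure set" where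
  "Lambda S = {M. prob_space M \<and> sets M = sets borel \<and> (AE z in M. z \<in> S)}"

datatype loss_kind = L1 | L2 | Linf

fun loss :: "loss_kind \<Rightarrow> real measure \<Rightarrow> real \<Rightarrow> ereal" where
  "loss L1 M s = ereal (integral\<^sup>L M (\<lambda>z. \<bar>s - z\<bar>))"
| "loss L2 M s = ereal (sqrt (integral\<^sup>L M (\<lambda>z. (s - z)^2)))"
| "loss Linf M s = esssup M (\<lambda>z. ereal \<bar>s - z\<bar>)"

definition optimal_SB1 :: "loss_kind \<Rightarrow> real measure \<Rightarrow> real \<Rightarrow> bool" where
  "optimal_SB1 k M s \<longleftrightarrow> (\<forall>t. loss k M s \<le> loss k M t)"

end

theory Submission
  imports Defs
begin

lemma meas_borel:
  assumes "sets M = sets borel" and "f \<in> borel_measurable borel"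
  shows "f \<in> borel_measurable M"
  using assms measurable_cong_sets by blast

lemma upper_bound:
  assumes P: "prob_space M" and B: "sets M = sets borel"
    and AEb: "AE z in M. a \<le> z \<and> z \<le> b"
    and opt: "optimal_SB1 k M x"
  shows "x \<le> b"
proof (rule ccontr)
  assume "\<not> x \<le> b" hence xb: "x > b" by simp
  interpret prob_space M by (rule P)
  have lo: "loss k M x \<le> loss k M b" using opt unfolding optimal_SB1_def by blast
  have mabs: "(\<lambda>z. \<bar>c - z\<bar>) \<in> borel_measurable M" for c :: real
    by (rule meas_borel[OF B]) simp
  have msq: "(\<lambda>z. (c - z)^2) \<in> borel_measurable M" for c :: real
    by (rule meas_borel[OF B]) simp
  have iabs: "integrable M (\<lambda>z. \<bar>c - z\<bar>)" for c :: real
    apply (rule integrable_const_bound[where B="\<bar>c\<bar> + \<bar>a\<bar> + \<bar>b\<bar>"])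
    using AEb apply (auto elim!: AE_mp)[1]
    using mabs .
  have isq: "integrable M (\<lambda>z. (c - z)^2)" for c :: real
    apply (rule integrable_const_bound[where B="(\<bar>c\<bar> + \<bar>a\<bar> + \<bar>b\<bar>)^2"])
    subgoal
    proof -
      have "AE z in M. \<bar>c - z\<bar> \<le> \<bar>c\<bar> + \<bar>a\<bar> + \<bar>b\<bar>"
        using AEb by (auto elim!: AE_mp)
      thus ?thesis
      proof (rule AE_mp, intro AE_I2 impI)
        fix z assume h: "\<bar>c - z\<bar> \<le> \<bar>c\<bar> + \<bar>a\<bar> + \<bar>b\<bar>"
        have "\<bar>c - z\<bar>^2 \<le> (\<bar>c\<bar> + \<bar>a\<bar> + \<bar>b\<bar>)^2"
          by (rule power_mono[OF h]) simp
        thus "norm ((c - z)^2) \<le> (\<bar>c\<bar> + \<bar>a\<bar> + \<bar>b\<bar>)^2" by simp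
      qed
    qed
    using msq .
  have ilin: "integrable M (\<lambda>z. b - z)"
    apply (rule integrable_const_bound[where B="\<bar>a\<bar> + 2*\<bar>b\<bar>"])
    using AEb apply (auto elim!: AE_mp)[1]
    by (rule meas_borel[OF B]) simp
  show False
  proof (cases k)
    case L1
    have "(\<integral>z. \<bar>x - z\<bar> \<partial>M) = (\<integral>z. \<bar>b - z\<bar> + (x - b) \<partial>M)"
      apply (rule integral_cong_AE)
        apply (rule mabs)
       apply (rule meas_borel[OF B]) apply simp
      using AEb xb by (auto elim!: AE_mp)
    also have "\<dots> = (\<integral>z. \<bar>b - z\<bar> \<partial>M) + (x - b)"
      using iabs by (simp add: prob_space)
    finally show False using lo L1 xb by simp
  next
    case L2
    have "(\<integral>z. (b - z)^2 \<partial>M) + (x - b)^2 = (\<integral>z. (b - z)^2 + (x - b)^2 \<partial>M)"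
      using isq by (simp add: prob_space)
    also have "\<dots> \<le> (\<integral>z. (x - z)^2 \<partial>M)"
      apply (rule integral_mono_AE)
      using isq apply (simp)
      using isq apply simp
      using AEb
    proof (rule AE_mp, intro AE_I2 impI)
      fix z assume "a \<le> z \<and> z \<le> b"
      hence zb: "z \<le> b" by simp
      have "(x - z)^2 = (b - z)^2 + (x-b)^2 + 2*(x-b)*(b-z)" by (simp add: power2_eq_square algebra_simps)
      moreover have "0 \<le> 2*(x-b)*(b-z)" using zb xb by simp
      ultimately show "(b - z)^2 + (x - b)^2 \<le> (x - z)^2" by linarith
    qed
    finally have "(\<integral>z. (b - z)^2 \<partial>M) + (x - b)^2 \<le> (\<integral>z. (x - z)^2 \<partial>M)" .
    moreover have "(x-b)^2 > 0" using xb by simp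
    moreover have "0 \<le> (\<integral>z. (b - z)^2 \<partial>M)" by simp
    ultimately have "(\<integral>z. (b - z)^2 \<partial>M) < (\<integral>z. (x - z)^2 \<partial>M)" by linarith
    hence "sqrt (\<integral>z. (b - z)^2 \<partial>M) < sqrt (\<integral>z. (x - z)^2 \<partial>M)"
      by (simp only: real_sqrt_less_iff)
    thus False using lo L2 by simp
  next
    case Linf
    define L where "L = esssup M (\<lambda>z. ereal \<bar>b - z\<bar>)"
    have me: "(\<lambda>z. ereal \<bar>c - z\<bar>) \<in> borel_measurable M" for c :: real
      by (rule meas_borel[OF B]) simp
    have "L \<le> ereal (b - a)" unfolding L_def
      apply (rule esssup_I[OF me])
      using AEb by (auto elim!: AE_mp)
    moreover have "ereal 0 \<le> L" unfolding L_def
    proof -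
      have "esssup M (\<lambda>z. ereal 0) = ereal 0"
        by (rule esssup_const) (simp add: emeasure_space_1)
      moreover have "esssup M (\<lambda>z. ereal 0) \<le> esssup M (\<lambda>z. ereal \<bar>b - z\<bar>)"
        by (rule esssup_mono) auto
      ultimately show "ereal 0 \<le> esssup M (\<lambda>z. ereal \<bar>b - z\<bar>)" by simp
    qed
    ultimately obtain l where l: "L = ereal l" by (cases L) auto
    have "esssup M (\<lambda>z. ereal \<bar>x - z\<bar>) \<le> ereal l" using lo Linf l L_def by simp
    hence "AE z in M. ereal \<bar>x - z\<bar> \<le> ereal l"
      using esssup_AE[of "\<lambda>z. ereal \<bar>x - z\<bar>" M]
      by (metis (mono_tags, lifting) AE_mp AE_I2 order.trans)
    hence "AE z in M. ereal \<bar>b - z\<bar> \<le> ereal (l - (x - b))"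
      using AEb xb by (auto elim!: AE_mp)
    hence "L \<le> ereal (l - (x - b))" unfolding L_def by (rule esssup_I[OF me])
    thus False using l xb by simp
  qed
qed


lemma lower_bound:
  assumes P: "prob_space M" and B: "sets M = sets borel"
    and AEb: "AE z in M. a \<le> z \<and> z \<le> b"
    and opt: "optimal_SB1 k M x"
  shows "a \<le> x"
proof (rule ccontr)
  assume "\<not> a \<le> x" hence xb: "x < a" by simp
  interpret prob_space M by (rule P)
  have lo: "loss k M x \<le> loss k M a" using opt unfolding optimal_SB1_def by blast
  have mabs: "(\<lambda>z. \<bar>c - z\<bar>) \<in> borel_measurable M" for c :: real
    by (rule meas_borel[OF B]) simp
  have msq: "(\<lambda>z. (c - z)^2) \<in> borel_measurable M" for c :: real
    by (rule meas_borel[OF B]) simp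
  have iabs: "integrable M (\<lambda>z. \<bar>c - z\<bar>)" for c :: real
    apply (rule integrable_const_bound[where B="\<bar>c\<bar> + \<bar>a\<bar> + \<bar>b\<bar>"])
    using AEb apply (auto elim!: AE_mp)[1]
    using mabs .
  have isq: "integrable M (\<lambda>z. (c - z)^2)" for c :: real
    apply (rule integrable_const_bound[where B="(\<bar>c\<bar> + \<bar>a\<bar> + \<bar>b\<bar>)^2"])
    subgoal
    proof -
      have "AE z in M. \<bar>c - z\<bar> \<le> \<bar>c\<bar> + \<bar>a\<bar> + \<bar>b\<bar>"
        using AEb by (auto elim!: AE_mp)
      thus ?thesis
      proof (rule AE_mp, intro AE_I2 impI)
        fix z assume h: "\<bar>c - z\<bar> \<le> \<bar>c\<bar> + \<bar>a\<bar> + \<bar>b\<bar>"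
        have "\<bar>c - z\<bar>^2 \<le> (\<bar>c\<bar> + \<bar>a\<bar> + \<bar>b\<bar>)^2"
          by (rule power_mono[OF h]) simp
        thus "norm ((c - z)^2) \<le> (\<bar>c\<bar> + \<bar>a\<bar> + \<bar>b\<bar>)^2" by simp
      qed
    qed
    using msq .
  have ilin: "integrable M (\<lambda>z. b - z)"
    apply (rule integrable_const_bound[where B="\<bar>a\<bar> + 2*\<bar>b\<bar>"])
    using AEb apply (auto elim!: AE_mp)[1]
    by (rule meas_borel[OF B]) simp
  show False
  proof (cases k)
    case L1
    have "(\<integral>z. \<bar>x - z\<bar> \<partial>M) = (\<integral>z. \<bar>a - z\<bar> + (a - x) \<partial>M)"
      apply (rule integral_cong_AE)
        apply (rule mabs)
       apply (rule meas_borel[OF B]) apply simp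
      using AEb xb by (auto elim!: AE_mp)
    also have "\<dots> = (\<integral>z. \<bar>a - z\<bar> \<partial>M) + (a - x)"
      using iabs by (simp add: prob_space)
    finally show False using lo L1 xb by simp
  next
    case L2
    have "(\<integral>z. (a - z)^2 \<partial>M) + (a - x)^2 = (\<integral>z. (a - z)^2 + (a - x)^2 \<partial>M)"
      using isq by (simp add: prob_space)
    also have "\<dots> \<le> (\<integral>z. (x - z)^2 \<partial>M)"
      apply (rule integral_mono_AE)
      using isq apply (simp)
      using isq apply simp
      using AEb
    proof (rule AE_mp, intro AE_I2 impI)
      fix z assume "a \<le> z \<and> z \<le> b"
      hence zb: "a \<le> z" by simp
      have "(x - z)^2 = (a - z)^2 + (a-x)^2 + 2*(a-x)*(z-a)" by (simp add: power2_eq_square algebra_simps)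
      moreover have "0 \<le> 2*(a-x)*(z-a)" using zb xb by simp
      ultimately show "(a - z)^2 + (a - x)^2 \<le> (x - z)^2" by linarith
    qed
    finally have "(\<integral>z. (a - z)^2 \<partial>M) + (a - x)^2 \<le> (\<integral>z. (x - z)^2 \<partial>M)" .
    moreover have "(a-x)^2 > 0" using xb by simp
    moreover have "0 \<le> (\<integral>z. (a - z)^2 \<partial>M)" by simp
    ultimately have "(\<integral>z. (a - z)^2 \<partial>M) < (\<integral>z. (x - z)^2 \<partial>M)" by linarith
    hence "sqrt (\<integral>z. (a - z)^2 \<partial>M) < sqrt (\<integral>z. (x - z)^2 \<partial>M)"
      by (simp only: real_sqrt_less_iff)
    thus False using lo L2 by simp
  next
    case Linf
    define L where "L = esssup M (\<lambda>z. ereal \<bar>a - z\<bar>)"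
    have me: "(\<lambda>z. ereal \<bar>c - z\<bar>) \<in> borel_measurable M" for c :: real
      by (rule meas_borel[OF B]) simp
    have "L \<le> ereal (b - a)" unfolding L_def
      apply (rule esssup_I[OF me])
      using AEb by (auto elim!: AE_mp)
    moreover have "ereal 0 \<le> L" unfolding L_def
    proof -
      have "esssup M (\<lambda>z. ereal 0) = ereal 0"
        by (rule esssup_const) (simp add: emeasure_space_1)
      moreover have "esssup M (\<lambda>z. ereal 0) \<le> esssup M (\<lambda>z. ereal \<bar>a - z\<bar>)"
        by (rule esssup_mono) auto
      ultimately show "ereal 0 \<le> esssup M (\<lambda>z. ereal \<bar>a - z\<bar>)" by simp
    qed
    ultimately obtain l where l: "L = ereal l" by (cases L) auto
    have "esssup M (\<lambda>z. ereal \<bar>x - z\<bar>) \<le> ereal l" using lo Linf l L_def by simp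
    hence "AE z in M. ereal \<bar>x - z\<bar> \<le> ereal l"
      using esssup_AE[of "\<lambda>z. ereal \<bar>x - z\<bar>" M]
      by (metis (mono_tags, lifting) AE_mp AE_I2 order.trans)
    hence "AE z in M. ereal \<bar>a - z\<bar> \<le> ereal (l - (a - x))"
      using AEb xb by (auto elim!: AE_mp)
    hence "L \<le> ereal (l - (a - x))" unfolding L_def by (rule esssup_I[OF me])
    thus False using l xb by simp
  qed
qed


lemma in_interval:
  assumes "M \<in> Lambda S" "S \<noteq> {}" "bdd_above S" "bdd_below S" "optimal_SB1 k M x"
  shows "Inf S \<le> x \<and> x \<le> Sup S"
proof -
  have P: "prob_space M" and B: "sets M = sets borel" and AS: "AE z in M. z \<in> S"
    using assms(1) unfolding Lambda_def by auto
  have "AE z in M. Inf S \<le> z \<and> z \<le> Sup S"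
    using AS by (rule AE_mp) (auto intro!: AE_I2 cInf_lower cSup_upper assms)
  thus ?thesis using lower_bound[OF P B _ assms(5)] upper_bound[OF P B _ assms(5)] by blast
qed

lemma dirac_in:
  assumes "s \<in> S"
  shows "return borel s \<in> Lambda S"
proof -
  have "AE z in return borel s. z = s"
    by (subst AE_return) auto
  hence "AE z in return borel s. z \<in> S" using assms by (auto elim!: AE_mp)
  thus ?thesis unfolding Lambda_def by (auto intro: prob_space_return)
qed

lemma dirac_opt:
  assumes "optimal_SB1 k (return borel s) x"
  shows "x = s"
proof -
  have "return borel s \<in> Lambda {s}" by (rule dirac_in) simp
  from in_interval[OF this _ _ _ assms] show ?thesis by simp
qed

theorem lemma1:
  fixes theta_OLS :: real and SB0 :: "'i \<Rightarrow> real" and I0 :: "'i set"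
    and k :: loss_kind and SB1 :: "real measure \<Rightarrow> real"
  assumes "I0 \<noteq> {}"
    and "bdd_above (SB0 ` I0)" and "bdd_below (SB0 ` I0)"
    and "\<forall>M \<in> Lambda (SB0 ` I0). optimal_SB1 k M (SB1 M)"
  shows "{Inf ((\<lambda>M. theta_OLS - SB1 M) ` Lambda (SB0 ` I0)) ..
          Sup ((\<lambda>M. theta_OLS - SB1 M) ` Lambda (SB0 ` I0))}
       = {theta_OLS - Sup (SB0 ` I0) .. theta_OLS - Inf (SB0 ` I0)}"
proof -
  define S where "S = SB0 ` I0"
  define V where "V = (\<lambda>M. theta_OLS - SB1 M) ` Lambda S"
  have Sne: "S \<noteq> {}" using assms(1) S_def by simp
  have ba: "bdd_above S" and bb: "bdd_below S" using assms S_def by auto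
  have opt: "\<And>M. M \<in> Lambda S \<Longrightarrow> optimal_SB1 k M (SB1 M)" using assms(4) S_def by auto
  have Vin: "\<And>v. v \<in> V \<Longrightarrow> theta_OLS - Sup S \<le> v \<and> v \<le> theta_OLS - Inf S"
    unfolding V_def using in_interval[OF _ Sne ba bb opt] by fastforce
  have sV: "\<And>s. s \<in> S \<Longrightarrow> theta_OLS - s \<in> V"
  proof -
    fix s assume s: "s \<in> S"
    have "return borel s \<in> Lambda S" by (rule dirac_in[OF s])
    moreover have "SB1 (return borel s) = s" by (rule dirac_opt[OF opt[OF calculation]])
    ultimately show "theta_OLS - s \<in> V" unfolding V_def by force
  qed
  have Vne: "V \<noteq> {}" using Sne sV by blast
  have Vba: "bdd_above V" using Vin by (auto intro!: bdd_aboveI)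
  have Vbb: "bdd_below V" using Vin by (auto intro!: bdd_belowI)
  have "Inf V = theta_OLS - Sup S"
  proof (rule antisym)
    show "theta_OLS - Sup S \<le> Inf V" using Vin Vne by (auto intro!: cInf_greatest)
    have "Sup S \<le> theta_OLS - Inf V"
      using Sne by (rule cSup_least) (use sV Vbb cInf_lower in fastforce)
    thus "Inf V \<le> theta_OLS - Sup S" by simp
  qed
  moreover have "Sup V = theta_OLS - Inf S"
  proof (rule antisym)
    show "Sup V \<le> theta_OLS - Inf S" using Vin Vne by (auto intro!: cSup_least)
    have "theta_OLS - Sup V \<le> Inf S"
      using Sne by (rule cInf_greatest) (use sV Vba cSup_upper in fastforce)
    thus "theta_OLS - Inf S \<le> Sup V" by simp
  qed
  ultimately show ?thesis unfolding V_def S_def by simp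
qed

end
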